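(* Let $d$ be an integer and let $G$ be a finite connected $d$-regular simple graph containing no cycle of length $3$ and no cycle of length $5$ as a subgraph. If $uv$ is an edge of $G$ with $\kappa_{LLY}(u,v)>0$, then there is a perfect matching between $N(u)\setminus\{v\}$ and $N(v)\setminus\{u\}$ using edges of $G$.
   Context: For vertices $u,v$ of a connected graph $G$, $d(u,v)$ is the graph distance, $N(v)$ is the neighborhood of $v$, $d_v=|N(v)|$. For $0\le\alpha<1$, the $\alpha$-lazy random walk is $m_x^\alpha(x)=\alpha$, $m_x^\alpha(v)=(1-\alpha)/d_x$ for $v\in N(x)$, $m_x^\alpha(v)=0$ otherwise. The transportation distance between probability distributions $m_1,m_2$ on $V(G)$ is $W(m_1,m_2)=\inf_A\sum_{x,y}A(x,y)d(x,y)$ over couplings $A:V\times V\to[0,1]$ with $\sum_yA(x,y)=m_1(x)$, $\sum_xA(x,y)=m_2(y)$. For distinct $x,y$, $\kappa_\alpha(x,y)=1-W(m_x^\alpha,m_y^\alpha)/d(x,y)$ and $\kappa_{LLY}(x,y)=\lim_{\alpha\to1}\kappa_\alpha(x,y)/(1-\alpha)$. *)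

theory Defs
  imports "HOL-Analysis.Analysis"
begin

definition simple_graph :: "'a set \<Rightarrow> ('a \<Rightarrow> 'a \<Rightarrow> bool) \<Rightarrow> bool" where
  "simple_graph V E \<longleftrightarrow> finite V \<and> (\<forall>x y. E x y \<longrightarrow> x \<in> V \<and> y \<in> V)
     \<and> (\<forall>x y. E x y \<longrightarrow> E y x) \<and> (\<forall>x. \<not> E x x)"

definition connected_graph :: "'a set \<Rightarrow> ('a \<Rightarrow> 'a \<Rightarrow> bool) \<Rightarrow> bool" where
  "connected_graph V E \<longleftrightarrow> V \<noteq> {} \<and> (\<forall>x\<in>V. \<forall>y\<in>V. \<exists>n. (E ^^ n) x y)"

definition gdist :: "('a \<Rightarrow> 'a \<Rightarrow> bool) \<Rightarrow> 'a \<Rightarrow> 'a \<Rightarrow> nat" where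
  "gdist E x y = (LEAST n. (E ^^ n) x y)"

definition nbhd :: "'a set \<Rightarrow> ('a \<Rightarrow> 'a \<Rightarrow> bool) \<Rightarrow> 'a \<Rightarrow> 'a set" where
  "nbhd V E v = {w \<in> V. E v w}"

definition regular_graph :: "'a set \<Rightarrow> ('a \<Rightarrow> 'a \<Rightarrow> bool) \<Rightarrow> nat \<Rightarrow> bool" where
  "regular_graph V E d \<longleftrightarrow> (\<forall>v\<in>V. card (nbhd V E v) = d)"

definition has_C3 :: "'a set \<Rightarrow> ('a \<Rightarrow> 'a \<Rightarrow> bool) \<Rightarrow> bool" where
  "has_C3 V E \<longleftrightarrow> (\<exists>a b c. distinct [a,b,c] \<and> E a b \<and> E b c \<and> E c a)"

definition has_C5 :: "'a set \<Rightarrow> ('a \<Rightarrow> 'a \<Rightarrow> bool) \<Rightarrow> bool" where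
  "has_C5 V E \<longleftrightarrow> (\<exists>a b c p q. distinct [a,b,c,p,q] \<and> E a b \<and> E b c \<and> E c p \<and> E p q \<and> E q a)"

definition lazy_walk :: "'a set \<Rightarrow> ('a \<Rightarrow> 'a \<Rightarrow> bool) \<Rightarrow> real \<Rightarrow> 'a \<Rightarrow> 'a \<Rightarrow> real" where
  "lazy_walk V E \<alpha> x v =
     (if v = x then \<alpha> else if v \<in> nbhd V E x then (1 - \<alpha>) / real (card (nbhd V E x)) else 0)"

definition is_coupling :: "'a set \<Rightarrow> ('a \<Rightarrow> real) \<Rightarrow> ('a \<Rightarrow> real) \<Rightarrow> ('a \<Rightarrow> 'a \<Rightarrow> real) \<Rightarrow> bool" where
  "is_coupling V m1 m2 A \<longleftrightarrow> (\<forall>x\<in>V. \<forall>y\<in>V. 0 \<le> A x y \<and> A x y \<le> 1)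
     \<and> (\<forall>x\<in>V. (\<Sum>y\<in>V. A x y) = m1 x) \<and> (\<forall>y\<in>V. (\<Sum>x\<in>V. A x y) = m2 y)"

definition transport_dist :: "'a set \<Rightarrow> ('a \<Rightarrow> 'a \<Rightarrow> bool) \<Rightarrow> ('a \<Rightarrow> real) \<Rightarrow> ('a \<Rightarrow> real) \<Rightarrow> real" where
  "transport_dist V E m1 m2 =
     Inf {(\<Sum>x\<in>V. \<Sum>y\<in>V. A x y * real (gdist E x y)) | A. is_coupling V m1 m2 A}"

definition kappa :: "'a set \<Rightarrow> ('a \<Rightarrow> 'a \<Rightarrow> bool) \<Rightarrow> real \<Rightarrow> 'a \<Rightarrow> 'a \<Rightarrow> real" where
  "kappa V E \<alpha> x y = 1 - transport_dist V E (lazy_walk V E \<alpha> x) (lazy_walk V E \<alpha> y) / real (gdist E x y)"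

definition kappa_LLY :: "'a set \<Rightarrow> ('a \<Rightarrow> 'a \<Rightarrow> bool) \<Rightarrow> 'a \<Rightarrow> 'a \<Rightarrow> real" where
  "kappa_LLY V E x y = Lim (at_left 1) (\<lambda>\<alpha>. kappa V E \<alpha> x y / (1 - \<alpha>))"

end

theory Submission
  imports Defs
begin

lemma hall:
  fixes R :: "'a \<Rightarrow> 'b \<Rightarrow> bool"
  assumes "finite A" "finite B"
    and "\<forall>S\<subseteq>A. card S \<le> card {y\<in>B. \<exists>x\<in>S. R x y}"
  shows "\<exists>f. inj_on f A \<and> (\<forall>x\<in>A. f x \<in> B \<and> R x (f x))"
  using assms
proof (induction "card A" arbitrary: A B rule: less_induct)
  case less
  show ?case
  proof (cases "A = {}")
    case True then show ?thesis by auto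
  next
    case Ane: False
    show ?thesis
    proof (cases "\<exists>S. S \<subseteq> A \<and> S \<noteq> {} \<and> S \<noteq> A \<and> card {y\<in>B. \<exists>x\<in>S. R x y} \<le> card S")
      case True
      then obtain S where S: "S \<subseteq> A" "S \<noteq> {}" "S \<noteq> A" "card {y\<in>B. \<exists>x\<in>S. R x y} \<le> card S" by blast
      define NS where "NS = {y\<in>B. \<exists>x\<in>S. R x y}"
      have fS: "finite S" using S less.prems(1) finite_subset by blast
      have cS: "card S < card A" using S less.prems(1) psubset_card_mono by blast
      have "\<exists>f. inj_on f S \<and> (\<forall>x\<in>S. f x \<in> B \<and> R x (f x))"
      proof (rule less.hyps[OF cS fS less.prems(2)])
        show "\<forall>T\<subseteq>S. card T \<le> card {y\<in>B. \<exists>x\<in>T. R x y}"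
        proof (intro allI impI)
          fix T assume "T \<subseteq> S"
          then have "T \<subseteq> A" using S(1) by (rule subset_trans)
          then show "card T \<le> card {y\<in>B. \<exists>x\<in>T. R x y}" using less.prems(3) by blast
        qed
      qed
      then obtain f1 where f1: "inj_on f1 S" "\<forall>x\<in>S. f1 x \<in> B \<and> R x (f1 x)" by blast
      have cNS: "card NS = card S" using less.prems(3) S unfolding NS_def by (meson dual_order.antisym)
      have cA': "card (A - S) < card A" using S less.prems(1)
        using card_Diff_subset[OF fS S(1)] card_gt_0_iff[of S] fS by auto
      have "\<exists>f. inj_on f (A - S) \<and> (\<forall>x\<in>A-S. f x \<in> B - NS \<and> R x (f x))"
      proof (rule less.hyps[OF cA'])
        show "finite (A - S)" using less.prems(1) by simp
        show "finite (B - NS)" using less.prems(2) by simp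
        show "\<forall>T\<subseteq>A-S. card T \<le> card {y\<in>B-NS. \<exists>x\<in>T. R x y}"
        proof (intro allI impI)
          fix T assume T: "T \<subseteq> A - S"
          have fT: "finite T" using T less.prems(1) finite_subset by blast
          have e: "{y\<in>B-NS. \<exists>x\<in>T. R x y} = {y\<in>B. \<exists>x\<in>T\<union>S. R x y} - NS" by (auto simp: NS_def)
          have sub: "NS \<subseteq> {y\<in>B. \<exists>x\<in>T\<union>S. R x y}" by (auto simp: NS_def)
          have fin: "finite {y\<in>B. \<exists>x\<in>T\<union>S. R x y}" using less.prems(2) by auto
          have 1: "card (T \<union> S) \<le> card {y\<in>B. \<exists>x\<in>T\<union>S. R x y}" using less.prems(3) T S(1) by (meson Diff_subset Un_least order_trans)
          have 2: "card (T \<union> S) = card T + card S" using T fS fT by (subst card_Un_disjoint) auto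
          have 3: "card ({y\<in>B. \<exists>x\<in>T\<union>S. R x y} - NS) = card {y\<in>B. \<exists>x\<in>T\<union>S. R x y} - card NS"
            using card_Diff_subset[OF finite_subset[OF sub fin] sub] .
          show "card T \<le> card {y\<in>B-NS. \<exists>x\<in>T. R x y}" using e 1 2 3 cNS by simp
        qed
      qed
      then obtain f2 where f2: "inj_on f2 (A - S)" "\<forall>x\<in>A-S. f2 x \<in> B - NS \<and> R x (f2 x)" by blast
      define f where "f x = (if x \<in> S then f1 x else f2 x)" for x
      have "inj_on f A"
      proof (rule inj_onI)
        fix x y assume xy: "x \<in> A" "y \<in> A" "f x = f y"
        have f1N: "f1 z \<in> NS" if "z \<in> S" for z using f1(2) that unfolding NS_def by blast
        show "x = y"
        proof (cases "x \<in> S"; cases "y \<in> S")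
          assume "x \<in> S" "y \<in> S" then show ?thesis using xy f1(1) unfolding f_def inj_on_def by auto
        next
          assume h: "x \<in> S" "y \<notin> S"
          then have "f1 x \<in> NS" "f2 y \<notin> NS" using f1N f2(2) xy(2) by auto
          moreover have "f x = f1 x" "f y = f2 y" using h unfolding f_def by auto
          ultimately show ?thesis using xy(3) by auto
        next
          assume h: "x \<notin> S" "y \<in> S"
          then have "f1 y \<in> NS" "f2 x \<notin> NS" using f1N f2(2) xy(1) by auto
          moreover have "f x = f2 x" "f y = f1 y" using h unfolding f_def by auto
          ultimately show ?thesis using xy(3) by auto
        next
          assume "x \<notin> S" "y \<notin> S" then show ?thesis using xy f2(1) unfolding f_def inj_on_def by auto
        qed
      qed
      moreover have "\<forall>x\<in>A. f x \<in> B \<and> R x (f x)" using f1 f2 unfolding f_def by auto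
      ultimately show ?thesis by blast
    next
      case False
      obtain a where a: "a \<in> A" using Ane by blast
      have "card {a} \<le> card {y\<in>B. \<exists>x\<in>{a}. R x y}" using less.prems(3) a by (meson empty_subsetI insert_subset)
      then have "card {y\<in>B. \<exists>x\<in>{a}. R x y} \<noteq> 0" by simp
      then have "{y\<in>B. \<exists>x\<in>{a}. R x y} \<noteq> {}" by (metis card.empty)
      then obtain b where b: "b \<in> B" "R a b" by auto
      have "\<exists>f. inj_on f (A-{a}) \<and> (\<forall>x\<in>A-{a}. f x \<in> B-{b} \<and> R x (f x))"
      proof (rule less.hyps)
        show "card (A - {a}) < card A" using a less.prems(1) by (meson card_Diff1_less)
        show "finite (A - {a})" "finite (B - {b})" using less.prems(1,2) by auto
        show "\<forall>T\<subseteq>A-{a}. card T \<le> card {y\<in>B-{b}. \<exists>x\<in>T. R x y}"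
        proof (intro allI impI)
          fix T assume T: "T \<subseteq> A - {a}"
          show "card T \<le> card {y\<in>B-{b}. \<exists>x\<in>T. R x y}"
          proof (cases "T = {}")
            case True then show ?thesis by simp
          next
            case Tne: False
            have "T \<noteq> A" using T a by auto
            have TA: "T \<subseteq> A" using T by auto
            then have gt: "card T < card {y\<in>B. \<exists>x\<in>T. R x y}" using False Tne \<open>T \<noteq> A\<close> not_le by blast
            have e: "{y\<in>B-{b}. \<exists>x\<in>T. R x y} = {y\<in>B. \<exists>x\<in>T. R x y} - {b}" by auto
            have fin: "finite {y\<in>B. \<exists>x\<in>T. R x y}" using less.prems(2) by auto
            show ?thesis unfolding e using gt card_Diff_singleton_if[of "{y\<in>B. \<exists>x\<in>T. R x y}" b] fin by auto
          qed
        qed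
      qed
      then obtain f2 where f2: "inj_on f2 (A-{a})" "\<forall>x\<in>A-{a}. f2 x \<in> B-{b} \<and> R x (f2 x)" by blast
      define f where "f = f2(a := b)"
      have i1: "inj_on f (A - {a})" using f2(1) unfolding f_def inj_on_def by auto
      have i2: "f a \<notin> f ` (A - {a} - {a})" using f2(2) unfolding f_def by auto
      have "inj_on f (insert a (A - {a}))" using i1 i2 by (simp only: inj_on_insert) simp
      moreover have "insert a (A - {a}) = A" using a by auto
      ultimately have "inj_on f A" by simp
      moreover have "\<forall>x\<in>A. f x \<in> B \<and> R x (f x)" using f2 b unfolding f_def by auto
      ultimately show ?thesis by blast
    qed
  qed
qed


context
  fixes V :: "'a set" and E :: "'a \<Rightarrow> 'a \<Rightarrow> bool"
  assumes G: "simple_graph V E" and C: "connected_graph V E"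
begin

lemma finV: "finite V" using G unfolding simple_graph_def by blast
lemma EV: "E x y \<Longrightarrow> x \<in> V \<and> y \<in> V" using G unfolding simple_graph_def by blast
lemma Esym: "E x y \<Longrightarrow> E y x" using G unfolding simple_graph_def by blast
lemma Eirr: "\<not> E x x" using G unfolding simple_graph_def by blast

lemma gdist_ge:
  assumes "x \<in> V" "y \<in> V" "\<forall>n<k. \<not> (E ^^ n) x y"
  shows "k \<le> gdist E x y"
proof -
  obtain n where "(E ^^ n) x y" using C assms unfolding connected_graph_def by blast
  then have "(E ^^ gdist E x y) x y" unfolding gdist_def by (rule LeastI)
  then show ?thesis using assms(3) by (meson not_le)
qed

lemma gdist_le1: "E x y \<Longrightarrow> gdist E x y \<le> 1"
  unfolding gdist_def by (rule Least_le) auto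

lemma gd1: "x \<in> V \<Longrightarrow> y \<in> V \<Longrightarrow> x \<noteq> y \<Longrightarrow> 1 \<le> gdist E x y"
  by (rule gdist_ge) auto

lemma gd2: "x \<in> V \<Longrightarrow> y \<in> V \<Longrightarrow> x \<noteq> y \<Longrightarrow> \<not> E x y \<Longrightarrow> 2 \<le> gdist E x y"
proof (rule gdist_ge)
  assume "x \<noteq> y" "\<not> E x y"
  show "\<forall>n<2. \<not> (E ^^ n) x y"
  proof (intro allI impI)
    fix n :: nat assume "n < 2" then have "n = 0 \<or> n = 1" by arith
    then show "\<not> (E ^^ n) x y" using \<open>x \<noteq> y\<close> \<open>\<not> E x y\<close> by auto
  qed
qed

lemma gd3: "x \<in> V \<Longrightarrow> y \<in> V \<Longrightarrow> x \<noteq> y \<Longrightarrow> \<not> E x y \<Longrightarrow> \<not> (\<exists>z. E x z \<and> E z y) \<Longrightarrow> 3 \<le> gdist E x y"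
proof (rule gdist_ge)
  assume a: "x \<noteq> y" "\<not> E x y" "\<not> (\<exists>z. E x z \<and> E z y)"
  have r2: "(E ^^ 2) x y \<longleftrightarrow> (\<exists>z. E x z \<and> E z y)" by (auto simp: numeral_2_eq_2 relpowp_Suc_right)
  have r0: "\<not> (E ^^ 0) x y" using a(1) by simp
  have r1: "\<not> (E ^^ 1) x y" using a(2) by auto
  show "\<forall>n<3. \<not> (E ^^ n) x y"
  proof (intro allI impI)
    fix n :: nat assume "n < 3"
    then have "n = 0 \<or> n = 1 \<or> n = 2" by presburger
    then consider "n = 0" | "n = 1" | "n = 2" by blast
    then show "\<not> (E ^^ n) x y"
    proof cases
      case 1 then show ?thesis using r0 by simp
    next
      case 2 then show ?thesis using r1 by simp
    next
      case 3 then have "(E ^^ n) x y = (E ^^ 2) x y" by simp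
      then show ?thesis using r2 a(3) by blast
    qed
  qed
qed

lemma nbhd_sub: "nbhd V E x \<subseteq> V" unfolding nbhd_def by auto
lemma fin_nbhd: "finite (nbhd V E x)" using finite_subset[OF nbhd_sub finV] .
lemma notin_nbhd: "x \<notin> nbhd V E x" using Eirr unfolding nbhd_def by auto

lemma sum_lw:
  assumes "x \<in> V"
  shows "(\<Sum>w\<in>V. h w * lazy_walk V E \<alpha> x w)
     = \<alpha> * h x + (1 - \<alpha>) / real (card (nbhd V E x)) * (\<Sum>w\<in>nbhd V E x. h w)"
proof -
  have "\<And>w. h w * lazy_walk V E \<alpha> x w = (if w = x then \<alpha> * h x else 0)
      + (if w \<in> nbhd V E x then (1 - \<alpha>) / real (card (nbhd V E x)) * h w else 0)"
    using notin_nbhd[of x] by (auto simp: lazy_walk_def)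
  then have "(\<Sum>w\<in>V. h w * lazy_walk V E \<alpha> x w) = (\<Sum>w\<in>V. (if w = x then \<alpha> * h x else 0))
      + (\<Sum>w\<in>V. if w \<in> nbhd V E x then (1 - \<alpha>) / real (card (nbhd V E x)) * h w else 0)"
    by (simp add: sum.distrib)
  also have "\<dots> = \<alpha> * h x + (\<Sum>w\<in>nbhd V E x. (1 - \<alpha>) / real (card (nbhd V E x)) * h w)"
    using assms finV nbhd_sub[of x] by (simp add: sum.inter_restrict[symmetric] Int_absorb1)
  finally show ?thesis by (simp add: sum_distrib_left)
qed

lemma lw_bounds:
  assumes "0 \<le> \<alpha>" "\<alpha> \<le> 1"
  shows "0 \<le> lazy_walk V E \<alpha> x w \<and> lazy_walk V E \<alpha> x w \<le> 1"
proof (cases "w \<in> nbhd V E x")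
  case True
  then have "1 \<le> real (card (nbhd V E x))" using fin_nbhd[of x] by (metis card_0_eq empty_iff less_one not_le of_nat_1 of_nat_le_iff)
  then have "(1 - \<alpha>) / real (card (nbhd V E x)) \<le> 1 - \<alpha>" using assms by (simp add: divide_le_eq mult_le_cancel_left1 order_trans)
  then show ?thesis using assms by (auto simp: lazy_walk_def)
qed (use assms in \<open>auto simp: lazy_walk_def\<close>)

lemma lw_sum1:
  assumes "x \<in> V" "nbhd V E x \<noteq> {}"
  shows "(\<Sum>w\<in>V. lazy_walk V E \<alpha> x w) = 1"
proof -
  have "card (nbhd V E x) > 0" using assms fin_nbhd card_gt_0_iff by blast
  then show ?thesis using sum_lw[OF assms(1), of "\<lambda>_. 1" \<alpha>] by simp
qed

lemma coupling_exists:
  assumes "0 \<le> \<alpha>" "\<alpha> \<le> 1" "x \<in> V" "y \<in> V" "nbhd V E x \<noteq> {}" "nbhd V E y \<noteq> {}"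
  shows "is_coupling V (lazy_walk V E \<alpha> x) (lazy_walk V E \<alpha> y) (\<lambda>a b. lazy_walk V E \<alpha> x a * lazy_walk V E \<alpha> y b)"
  unfolding is_coupling_def
proof (intro conjI ballI)
  fix a b
  show "0 \<le> lazy_walk V E \<alpha> x a * lazy_walk V E \<alpha> y b" using lw_bounds assms by simp
  show "lazy_walk V E \<alpha> x a * lazy_walk V E \<alpha> y b \<le> 1" using lw_bounds[OF assms(1,2)] by (meson mult_le_one)
next
  fix a show "(\<Sum>b\<in>V. lazy_walk V E \<alpha> x a * lazy_walk V E \<alpha> y b) = lazy_walk V E \<alpha> x a"
    using lw_sum1[OF assms(4,6)] by (simp add: sum_distrib_left[symmetric])
next
  fix b show "(\<Sum>a\<in>V. lazy_walk V E \<alpha> x a * lazy_walk V E \<alpha> y b) = lazy_walk V E \<alpha> y b"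
    using lw_sum1[OF assms(3,5)] by (simp add: sum_distrib_right[symmetric])
qed

lemma cost_nonneg:
  assumes "is_coupling V m1 m2 P"
  shows "0 \<le> (\<Sum>x\<in>V. \<Sum>y\<in>V. P x y * real (gdist E x y))"
  using assms unfolding is_coupling_def by (auto intro!: sum_nonneg)

lemma coupling_zero1:
  assumes "is_coupling V m1 m2 P" "x \<in> V" "m1 x = 0" "y \<in> V"
  shows "P x y = 0"
proof -
  have s0: "(\<Sum>y\<in>V. P x y) = 0" using assms unfolding is_coupling_def by auto
  have nn: "\<And>y. y \<in> V \<Longrightarrow> 0 \<le> P x y" using assms unfolding is_coupling_def by auto
  have "\<forall>y\<in>V. P x y = 0" using sum_nonneg_eq_0_iff[OF finV nn] s0 by simp
  then show ?thesis using assms(4) by simp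
qed

lemma coupling_zero2:
  assumes "is_coupling V m1 m2 P" "y \<in> V" "m2 y = 0" "x \<in> V"
  shows "P x y = 0"
proof -
  have s0: "(\<Sum>x\<in>V. P x y) = 0" using assms unfolding is_coupling_def by auto
  have nn: "\<And>x. x \<in> V \<Longrightarrow> 0 \<le> P x y" using assms unfolding is_coupling_def by auto
  have "\<forall>x\<in>V. P x y = 0" using sum_nonneg_eq_0_iff[OF finV nn] s0 by simp
  then show ?thesis using assms(4) by simp
qed

lemma coupling_dual:
  assumes "is_coupling V m1 m2 P"
  shows "(\<Sum>x\<in>V. \<Sum>y\<in>V. P x y * (f x - f y)) = (\<Sum>x\<in>V. f x * m1 x) - (\<Sum>y\<in>V. f y * m2 y)"
proof -
  have "(\<Sum>x\<in>V. \<Sum>y\<in>V. P x y * (f x - f y)) = (\<Sum>x\<in>V. \<Sum>y\<in>V. f x * P x y) - (\<Sum>x\<in>V. \<Sum>y\<in>V. f y * P x y)"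
    by (simp add: algebra_simps sum_subtractf)
  also have "(\<Sum>x\<in>V. \<Sum>y\<in>V. f y * P x y) = (\<Sum>y\<in>V. \<Sum>x\<in>V. f y * P x y)" by (rule sum.swap)
  also have "\<dots> = (\<Sum>y\<in>V. f y * m2 y)" using assms unfolding is_coupling_def by (simp add: sum_distrib_left[symmetric])
  also have "(\<Sum>x\<in>V. \<Sum>y\<in>V. f x * P x y) = (\<Sum>x\<in>V. f x * m1 x)" using assms unfolding is_coupling_def by (simp add: sum_distrib_left[symmetric])
  finally show ?thesis .
qed

lemma gd_edge: "E x y \<Longrightarrow> gdist E x y = 1"
  using gdist_le1[of x y] gd1[of x y] EV Eirr by (metis le_antisym)

end

context
  fixes V :: "'a set" and E :: "'a \<Rightarrow> 'a \<Rightarrow> bool"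
  assumes G: "simple_graph V E" and C: "connected_graph V E"
begin

lemma kappa_mono:
  assumes uv: "E u v" and ab: "0 \<le> a" "a \<le> b" "b < 1"
  shows "kappa V E a u v / (1 - a) \<le> kappa V E b u v / (1 - b)"
proof -
  have uV: "u \<in> V" and vV: "v \<in> V" using EV[OF G C uv] by auto
  have nu: "nbhd V E u \<noteq> {}" using uv vV unfolding nbhd_def by auto
  have nv: "nbhd V E v \<noteq> {}" using Esym[OF G C uv] uV unfolding nbhd_def by auto
  have fin: "finite V" using finV[OF G C] .
  define W where "W \<alpha> = transport_dist V E (lazy_walk V E \<alpha> u) (lazy_walk V E \<alpha> v)" for \<alpha>
  define Cs where "Cs \<alpha> = {(\<Sum>x\<in>V. \<Sum>y\<in>V. P x y * real (gdist E x y)) | P. is_coupling V (lazy_walk V E \<alpha> u) (lazy_walk V E \<alpha> v) P}" for \<alpha>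
  have WCs: "W \<alpha> = Inf (Cs \<alpha>)" for \<alpha> by (simp add: W_def Cs_def transport_dist_def)
  have bdd: "bdd_below (Cs \<alpha>)" for \<alpha>
    unfolding Cs_def by (rule bdd_belowI[of _ 0]) (auto intro: cost_nonneg[OF G C])
  have ne: "Cs \<alpha> \<noteq> {}" if "0 \<le> \<alpha>" "\<alpha> \<le> 1" for \<alpha>
    unfolding Cs_def using coupling_exists[OF G C that uV vV nu nv] by blast
  define t where "t = (1 - b) / (1 - a)"
  have t: "0 < t" "t \<le> 1" "t * (1 - a) = 1 - b" using ab unfolding t_def by (auto simp: field_simps)
  have lwt: "lazy_walk V E b x w = t * lazy_walk V E a x w + (1 - t) * (if w = x then 1 else 0)" for x w
  proof -
    have "b = t * a + (1 - t)" using t(3) by (simp add: algebra_simps)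
    moreover have "(1 - b) / real (card (nbhd V E x)) = t * ((1 - a) / real (card (nbhd V E x)))"
      using t(3) by simp
    ultimately show ?thesis unfolding lazy_walk_def by auto
  qed
  have gduv: "real (gdist E u v) = 1" using gd_edge[OF G C uv] by simp
  have step: "W b \<le> t * (\<Sum>x\<in>V. \<Sum>y\<in>V. P x y * real (gdist E x y)) + (1 - t)"
    if P: "is_coupling V (lazy_walk V E a u) (lazy_walk V E a v) P" for P
  proof -
    define Q where "Q x y = t * P x y + (1 - t) * (if x = u \<and> y = v then 1 else 0)" for x y
    have d1: "(\<Sum>y\<in>V. (if x = u \<and> y = v then 1 else 0)) = (if x = u then 1 else (0::real))" for x
      by (cases "x = u") (simp_all add: fin vV)
    have d2: "(\<Sum>x\<in>V. (if x = u \<and> y = v then 1 else 0)) = (if y = v then 1 else (0::real))" for y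
      by (cases "y = v") (simp_all add: fin uV)
    have "is_coupling V (lazy_walk V E b u) (lazy_walk V E b v) Q"
      unfolding is_coupling_def
    proof (intro conjI ballI)
      fix x y assume "x \<in> V" "y \<in> V"
      then have "0 \<le> P x y" "P x y \<le> 1" using P unfolding is_coupling_def by auto
      then show "0 \<le> Q x y" "Q x y \<le> 1" unfolding Q_def using t
        by (auto simp: mult_le_one intro!: add_nonneg_nonneg)
    next
      fix x assume "x \<in> V"
      have "(\<Sum>y\<in>V. Q x y) = t * (\<Sum>y\<in>V. P x y) + (1 - t) * (\<Sum>y\<in>V. (if x = u \<and> y = v then 1 else 0))"
        unfolding Q_def by (simp add: sum.distrib sum_distrib_left)
      also have "\<dots> = lazy_walk V E b u x" using P \<open>x \<in> V\<close> unfolding is_coupling_def d1 lwt[of u x]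
        by (auto simp: eq_commute[of x u])
      finally show "(\<Sum>y\<in>V. Q x y) = lazy_walk V E b u x" .
    next
      fix y assume "y \<in> V"
      have "(\<Sum>x\<in>V. Q x y) = t * (\<Sum>x\<in>V. P x y) + (1 - t) * (\<Sum>x\<in>V. (if x = u \<and> y = v then 1 else 0))"
        unfolding Q_def by (simp add: sum.distrib sum_distrib_left)
      also have "\<dots> = lazy_walk V E b v y" using P \<open>y \<in> V\<close> unfolding is_coupling_def d2 lwt[of v y]
        by (auto simp: eq_commute[of y v])
      finally show "(\<Sum>x\<in>V. Q x y) = lazy_walk V E b v y" .
    qed
    then have "W b \<le> (\<Sum>x\<in>V. \<Sum>y\<in>V. Q x y * real (gdist E x y))"
      unfolding WCs by (intro cInf_lower bdd) (auto simp: Cs_def)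
    also have "(\<Sum>x\<in>V. \<Sum>y\<in>V. Q x y * real (gdist E x y))
        = t * (\<Sum>x\<in>V. \<Sum>y\<in>V. P x y * real (gdist E x y))
          + (1 - t) * (\<Sum>x\<in>V. \<Sum>y\<in>V. (if x = u \<and> y = v then 1 else 0) * real (gdist E x y))"
      unfolding Q_def by (simp add: sum.distrib[symmetric] sum_distrib_left distrib_right mult.assoc)
    also have "(\<Sum>x\<in>V. \<Sum>y\<in>V. (if x = u \<and> y = v then 1 else 0) * real (gdist E x y)) = 1"
    proof -
      have "(\<Sum>y\<in>V. (if x = u \<and> y = v then 1 else 0) * real (gdist E x y))
          = (if x = u then real (gdist E u v) else 0)" for x
      proof (cases "x = u")
        case True
        have "(\<Sum>y\<in>V. (if x = u \<and> y = v then 1 else 0) * real (gdist E x y))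
           = (\<Sum>y\<in>V. if y = v then real (gdist E u v) else 0)" using True by (intro sum.cong) auto
        then show ?thesis using True by (simp add: fin vV)
      qed simp
      then show ?thesis by (simp add: fin uV gduv)
    qed
    finally show ?thesis by simp
  qed
  have "(W b - (1 - t)) / t \<le> Inf (Cs a)"
  proof (rule cInf_greatest)
    show "Cs a \<noteq> {}" using ne ab by auto
  next
    fix c assume "c \<in> Cs a"
    then obtain P where "is_coupling V (lazy_walk V E a u) (lazy_walk V E a v) P"
      "c = (\<Sum>x\<in>V. \<Sum>y\<in>V. P x y * real (gdist E x y))" unfolding Cs_def by blast
    then show "(W b - (1 - t)) / t \<le> c" using step t(1) by (simp add: pos_divide_le_eq algebra_simps)
  qed
  then have "W b - (1 - t) \<le> t * W a" using t(1) by (simp add: WCs pos_divide_le_eq mult.commute)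
  then have "t * (1 - W a) \<le> 1 - W b" by (simp add: algebra_simps)
  moreover have ka: "kappa V E \<alpha> u v = 1 - W \<alpha>" for \<alpha> unfolding kappa_def W_def gduv by simp
  moreover have "(1 - W a) / (1 - a) = t * (1 - W a) / (1 - b)"
  proof -
    have "1 - a > 0" "1 - b > 0" using ab by auto
    then have "t / (1 - b) = 1 / (1 - a)" unfolding t_def by simp
    then have "(1 - W a) * (1 / (1 - a)) = (1 - W a) * (t / (1 - b))" by simp
    then show ?thesis by simp
  qed
  ultimately show ?thesis using ab by (simp add: divide_right_mono)
qed

end

theorem lemma2p3:
  fixes V :: "'a set" and E :: "'a \<Rightarrow> 'a \<Rightarrow> bool" and d :: nat and u v :: 'a
  assumes "simple_graph V E" and "connected_graph V E" and "regular_graph V E d"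
    and "\<not> has_C3 V E" and "\<not> has_C5 V E"
    and "E u v" and "kappa_LLY V E u v > 0"
  shows "\<exists>f. bij_betw f (nbhd V E u - {v}) (nbhd V E v - {u})
              \<and> (\<forall>w \<in> nbhd V E u - {v}. E w (f w))"
proof (rule ccontr)
  assume nf: "\<not> ?thesis"
  note G = assms(1) and C = assms(2)
  have fin: "finite V" using finV[OF G C] .
  have uV: "u \<in> V" and vV: "v \<in> V" using EV[OF G C assms(6)] by auto
  have Es: "E x y \<Longrightarrow> E y x" for x y using Esym[OF G C] .
  have Ei: "\<not> E x x" for x using Eirr[OF G C] .
  have EVx: "E x y \<Longrightarrow> x \<in> V \<and> y \<in> V" for x y using EV[OF G C] .
  have noC3: "\<not> (E a b \<and> E b c \<and> E c a)" if "distinct [a,b,c]" for a b c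
    using assms(4) that unfolding has_C3_def by blast
  have noC5: "\<not> (E a b \<and> E b c \<and> E c p \<and> E p q \<and> E q a)" if "distinct [a,b,c,p,q]" for a b c p q
    using assms(5) that unfolding has_C5_def by blast
  define NU where "NU = nbhd V E u"
  define NV where "NV = nbhd V E v"
  define A0 where "A0 = NU - {v}"
  define B0 where "B0 = NV - {u}"
  have NUi: "x \<in> NU \<longleftrightarrow> E u x" for x unfolding NU_def nbhd_def using EVx by auto
  have NVi: "x \<in> NV \<longleftrightarrow> E v x" for x unfolding NV_def nbhd_def using EVx by auto
  have vNU: "v \<in> NU" using assms(6) NUi by auto
  have uNV: "u \<in> NV" using assms(6) Es NVi by auto
  have finNU: "finite NU" and finNV: "finite NV" unfolding NU_def NV_def using fin_nbhd[OF G C] by auto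
  have cNU: "card NU = d" and cNV: "card NV = d" using assms(3) uV vV unfolding regular_graph_def NU_def NV_def by auto
  have dpos: "d > 0" using cNU vNU finNU by (metis card_0_eq empty_iff gr0I)
  have cA0: "card A0 = d - 1" unfolding A0_def using cNU vNU finNU by simp
  have cB0: "card B0 = d - 1" unfolding B0_def using cNV uNV finNV by simp
  have finA0: "finite A0" and finB0: "finite B0" unfolding A0_def B0_def using finNU finNV by auto
  have uv_ne: "u \<noteq> v" using assms(6) Ei by auto
  have A0i: "x \<in> A0 \<longleftrightarrow> E u x \<and> x \<noteq> v" for x unfolding A0_def using NUi by auto
  have B0i: "x \<in> B0 \<longleftrightarrow> E v x \<and> x \<noteq> u" for x unfolding B0_def using NVi by auto
  have disj: "x \<notin> B0" if "x \<in> A0" for x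
  proof
    assume "x \<in> B0"
    then have "E u x" "E v x" "x \<noteq> u" "x \<noteq> v" using that A0i B0i by auto
    then show False using noC3[of u v x] uv_ne assms(6) Es by auto
  qed
  have "\<not> (\<forall>S\<subseteq>A0. card S \<le> card {y\<in>B0. \<exists>x\<in>S. E x y})"
  proof
    assume h: "\<forall>S\<subseteq>A0. card S \<le> card {y\<in>B0. \<exists>x\<in>S. E x y}"
    obtain f where f: "inj_on f A0" "\<forall>x\<in>A0. f x \<in> B0 \<and> E x (f x)"
      using hall[OF finA0 finB0 h] by blast
    have "f ` A0 \<subseteq> B0" using f by auto
    moreover have "card (f ` A0) = card B0" using card_image[OF f(1)] cA0 cB0 by simp
    ultimately have "f ` A0 = B0" using finB0 by (simp add: card_subset_eq)
    then have "bij_betw f A0 B0" using f(1) unfolding bij_betw_def by auto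
    then show False using nf f(2) unfolding A0_def B0_def NU_def NV_def by blast
  qed
  then obtain S where S: "S \<subseteq> A0" "card {y\<in>B0. \<exists>x\<in>S. E x y} < card S" by (auto simp: not_le)
  define T where "T = {y\<in>B0. \<exists>x\<in>S. E x y}"
  have TB: "T \<subseteq> B0" unfolding T_def by auto
  have finS: "finite S" using finite_subset[OF S(1) finA0] .
  have finT: "finite T" using finite_subset[OF TB finB0] .
  have ST: "card T < card S" using S(2) unfolding T_def .
  define \<phi> :: "'a \<Rightarrow> real" where
    "\<phi> z = (if z = u then 1 else if z \<in> S then 2 else if z \<in> T then 1 else if z \<in> B0 then -1 else 0)" for z
  have \<phi>b: "-1 \<le> \<phi> z" "\<phi> z \<le> 2" for z unfolding \<phi>_def by auto
  have vS: "v \<notin> S" and uS: "u \<notin> S" using S(1) A0i Ei by auto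
  have vB: "v \<notin> B0" and uB: "u \<notin> B0" using B0i Ei by auto
  have phiu: "\<phi> u = 1" unfolding \<phi>_def by simp
  have phiv: "\<phi> v = 0" unfolding \<phi>_def using uv_ne vS vB TB by auto
  have lip: "\<phi> x - \<phi> y \<le> real (gdist E x y)"
    if xyV: "x \<in> V" "y \<in> V" and xs: "x = u \<or> x \<in> NU" and ys: "y = v \<or> y \<in> NV" for x y
  proof (cases "x = y")
    case True then show ?thesis by simp
  next
    case xy: False
    have g1: "1 \<le> real (gdist E x y)" using gd1[OF G C xyV xy] by simp
    have g2: "2 \<le> real (gdist E x y)" if "\<not> E x y" using gd2[OF G C xyV xy that] by simp
    have g3: "3 \<le> real (gdist E x y)" if "\<not> E x y" "\<not> (\<exists>z. E x z \<and> E z y)"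
      using gd3[OF G C xyV xy that] by simp
    consider "x = u" | "x = v" | "x \<in> A0" using xs A0_def by auto
    then show ?thesis
    proof cases
      case 1
      then consider "y = v" | "y \<in> B0" using ys xy B0_def by auto
      then show ?thesis
      proof cases
        case 1 then show ?thesis using g1 \<open>x = u\<close> phiu phiv by simp
      next
        case 2
        then have "E v y" "y \<noteq> u" using B0i by auto
        moreover have "v \<noteq> y" using \<open>E v y\<close> Ei by auto
        ultimately have "\<not> E u y" using noC3[of u v y] uv_ne assms(6) Es by auto
        then show ?thesis using g2 \<open>x = u\<close> phiu \<phi>b(1)[of y] by simp
      qed
    next
      case 2 then show ?thesis using g1 phiv \<phi>b(1)[of y] by simp
    next
      case xA: 3
      then have Eux: "E u x" "x \<noteq> v" using A0i by auto
      have xu: "x \<noteq> u" using Eux Ei by auto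
      consider "y = u" | "y = v" | "y \<in> B0" using ys B0_def by auto
      then show ?thesis
      proof cases
        case 1 then show ?thesis using g1 phiu \<phi>b(2)[of x] by simp
      next
        case 2
        have "\<not> E x v" using noC3[of u x v] Eux xu uv_ne assms(6) Es by auto
        then show ?thesis using g2 2 phiv \<phi>b(2)[of x] by simp
      next
        case 3
        then have Evy: "E v y" "y \<noteq> u" using B0i by auto
        have yS: "y \<notin> S" using 3 disj S(1) by auto
        have yv: "y \<noteq> v" using Evy Ei by auto
        show ?thesis
        proof (cases "x \<in> S")
          case xS: True
          show ?thesis
          proof (cases "y \<in> T")
            case True
            then show ?thesis using xS xu yS Evy g1 unfolding \<phi>_def by simp
          next
            case False
            have nE: "\<not> E x y" using False xS 3 unfolding T_def by auto
            have nz: "\<not> (\<exists>z. E x z \<and> E z y)"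
            proof
              assume "\<exists>z. E x z \<and> E z y"
              then obtain z where z: "E x z" "E z y" by blast
              have "z \<noteq> u" using z(2) noC3[of u v y] uv_ne assms(6) Evy yv Es by auto
              moreover have "z \<noteq> v" using z(1) noC3[of u x v] Eux xu uv_ne assms(6) Es by auto
              moreover have "x \<noteq> z" "z \<noteq> y" using z Ei by auto
              moreover have "x \<noteq> y" using xy .
              ultimately have "distinct [u, x, z, y, v]" using xu uv_ne Evy yv Eux by auto
              then show False using noC5[of u x z y v] Eux z Es Evy assms(6) by auto
            qed
            have "\<phi> x = 2" "\<phi> y = -1" using xS xu Evy yS False 3 unfolding \<phi>_def by auto
            then show ?thesis using g3[OF nE nz] by simp
          qed
        next
          case False
          have "\<phi> x = 0" using False xu disj[OF xA] TB unfolding \<phi>_def by auto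
          then show ?thesis using g1 \<phi>b(1)[of y] by simp
        qed
      qed
    qed
  qed
  have NUins: "NU = insert v A0" using vNU A0_def by auto
  have NVins: "NV = insert u B0" using uNV B0_def by auto
  have sumNU: "(\<Sum>z\<in>NU. \<phi> z) = 2 * real (card S)"
  proof -
    have "(\<Sum>z\<in>A0. \<phi> z) = (\<Sum>z\<in>A0. if z \<in> S then 2 else 0)"
    proof (rule sum.cong)
      fix z assume z: "z \<in> A0"
      then have "z \<noteq> u" "z \<notin> B0" "z \<notin> T" using A0i Ei disj TB by auto
      then show "\<phi> z = (if z \<in> S then 2 else 0)" unfolding \<phi>_def by auto
    qed simp
    also have "\<dots> = (\<Sum>z\<in>A0 \<inter> S. 2)" by (rule sum.inter_restrict[OF finA0, symmetric])
    also have "A0 \<inter> S = S" using S(1) by auto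
    also have "(\<Sum>z\<in>S. (2::real)) = 2 * real (card S)" by simp
    finally show ?thesis unfolding NUins using finA0 phiv A0i by simp
  qed
  have sumNV: "(\<Sum>z\<in>NV. \<phi> z) = 1 + 2 * real (card T) - real (card B0)"
  proof -
    have "(\<Sum>z\<in>B0. \<phi> z) = (\<Sum>z\<in>B0. (if z \<in> T then 2 else 0) - 1)"
    proof (rule sum.cong)
      fix z assume z: "z \<in> B0"
      then have "z \<noteq> u" "z \<notin> S" using B0i disj S(1) by auto
      then show "\<phi> z = (if z \<in> T then 2 else 0) - 1" using z unfolding \<phi>_def by auto
    qed simp
    also have "\<dots> = (\<Sum>z\<in>B0. if z \<in> T then 2 else 0) - real (card B0)"
      by (simp add: sum_subtractf)
    also have "(\<Sum>z\<in>B0. if z \<in> T then 2 else 0) = (\<Sum>z\<in>B0 \<inter> T. (2::real))"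
      by (rule sum.inter_restrict[OF finB0, symmetric])
    also have "B0 \<inter> T = T" using TB by auto
    also have "(\<Sum>z\<in>T. (2::real)) = 2 * real (card T)" by simp
    finally show ?thesis unfolding NVins using finB0 phiu uB by simp
  qed
  have cost1: "1 \<le> (\<Sum>x\<in>V. \<Sum>y\<in>V. P x y * real (gdist E x y))"
    if \<alpha>: "0 \<le> \<alpha>" "\<alpha> < 1" and P: "is_coupling V (lazy_walk V E \<alpha> u) (lazy_walk V E \<alpha> v) P" for \<alpha> P
  proof -
    have trm: "P x y * (\<phi> x - \<phi> y) \<le> P x y * real (gdist E x y)" if "x \<in> V" "y \<in> V" for x y
    proof (cases "(x = u \<or> x \<in> NU) \<and> (y = v \<or> y \<in> NV)")
      case True
      have "0 \<le> P x y" using P that unfolding is_coupling_def by auto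
      then show ?thesis using lip[OF that] True by (simp add: mult_left_mono)
    next
      case False
      then consider "\<not> (x = u \<or> x \<in> NU)" | "\<not> (y = v \<or> y \<in> NV)" by blast
      then have "P x y = 0"
      proof cases
        case 1
        then have "lazy_walk V E \<alpha> u x = 0" unfolding lazy_walk_def NU_def by auto
        then show ?thesis using coupling_zero1[OF G C P that(1) _ that(2)] by simp
      next
        case 2
        then have "lazy_walk V E \<alpha> v y = 0" unfolding lazy_walk_def NV_def by auto
        then show ?thesis using coupling_zero2[OF G C P that(2) _ that(1)] by simp
      qed
      then show ?thesis by simp
    qed
    have "(\<Sum>x\<in>V. \<Sum>y\<in>V. P x y * (\<phi> x - \<phi> y)) \<le> (\<Sum>x\<in>V. \<Sum>y\<in>V. P x y * real (gdist E x y))"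
      by (intro sum_mono) (simp add: trm)
    moreover have "(\<Sum>x\<in>V. \<Sum>y\<in>V. P x y * (\<phi> x - \<phi> y))
        = (\<Sum>x\<in>V. \<phi> x * lazy_walk V E \<alpha> u x) - (\<Sum>y\<in>V. \<phi> y * lazy_walk V E \<alpha> v y)"
      by (rule coupling_dual[OF G C P])
    moreover have "(\<Sum>x\<in>V. \<phi> x * lazy_walk V E \<alpha> u x) = \<alpha> + (1 - \<alpha>) / real d * (2 * real (card S))"
      using sum_lw[OF G C uV, of \<phi> \<alpha>] phiu sumNU cNU unfolding NU_def by simp
    moreover have "(\<Sum>y\<in>V. \<phi> y * lazy_walk V E \<alpha> v y) = (1 - \<alpha>) / real d * (1 + 2 * real (card T) - real (card B0))"
      using sum_lw[OF G C vV, of \<phi> \<alpha>] phiv sumNV cNV unfolding NV_def by simp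
    moreover have "1 \<le> \<alpha> + (1 - \<alpha>) / real d * (2 * real (card S)) - (1 - \<alpha>) / real d * (1 + 2 * real (card T) - real (card B0))"
    proof -
      have B: "real (card B0) = real d - 1" using cB0 dpos by simp
      have sT: "real (card T) + 1 \<le> real (card S)" using ST by simp
      have c0: "0 \<le> (1 - \<alpha>) / real d" using \<alpha> dpos by simp
      have "(1 - \<alpha>) / real d * (2 * real (card S)) - (1 - \<alpha>) / real d * (1 + 2 * real (card T) - real (card B0))
          = (1 - \<alpha>) / real d * (2 * (real (card S) - real (card T)) + real d - 2)"
      proof -
        have alg: "\<And>c s t D::real. c * (2 * s) - c * (1 + 2 * t - (D - 1)) = c * (2 * (s - t) + D - 2)"
          by (simp add: algebra_simps)
        show ?thesis unfolding B by (rule alg)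
      qed
      also have "\<dots> \<ge> (1 - \<alpha>) / real d * real d" using c0 sT by (intro mult_left_mono) auto
      finally show ?thesis using dpos by simp
    qed
    ultimately show ?thesis by linarith
  qed
  have nuu: "nbhd V E u \<noteq> {}" and nvv: "nbhd V E v \<noteq> {}" using vNU uNV NU_def NV_def by auto
  have kneg: "kappa V E \<alpha> u v / (1 - \<alpha>) \<le> 0" if \<alpha>: "0 \<le> \<alpha>" "\<alpha> < 1" for \<alpha>
  proof -
    have "1 \<le> transport_dist V E (lazy_walk V E \<alpha> u) (lazy_walk V E \<alpha> v)"
      unfolding transport_dist_def
    proof (rule cInf_greatest)
      show "{\<Sum>x\<in>V. \<Sum>y\<in>V. A x y * real (gdist E x y) |A. is_coupling V (lazy_walk V E \<alpha> u) (lazy_walk V E \<alpha> v) A} \<noteq> {}"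
        using coupling_exists[OF G C \<alpha>(1) _ uV vV nuu nvv] \<alpha> by auto
    qed (use cost1[OF \<alpha>] in auto)
    then have "kappa V E \<alpha> u v \<le> 0" unfolding kappa_def using gd_edge[OF G C assms(6)] by simp
    then show ?thesis using \<alpha> by (simp add: divide_nonpos_pos)
  qed
  define g where "g = (\<lambda>\<alpha>. kappa V E \<alpha> u v / (1 - \<alpha>))"
  have lim: "(g \<longlongrightarrow> Sup (g ` ({..<1} \<inter> {0..}))) (at 1 within ({..<1} \<inter> {0..}))"
    by (rule Lim_left_bound[where K=0]) (auto simp: g_def intro: kappa_mono[OF G C assms(6)] kneg)
  have "at (1::real) within ({..<1} \<inter> {0..}) = at_left 1"
    by (rule at_within_nhd[of _ "{0<..<2}"]) auto
  with lim have lim2: "(g \<longlongrightarrow> Sup (g ` ({..<1} \<inter> {0..}))) (at_left 1)" by simp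
  have "kappa_LLY V E u v = Sup (g ` ({..<1} \<inter> {0..}))"
    unfolding kappa_LLY_def g_def[symmetric] by (rule tendsto_Lim[OF trivial_limit_at_left_real lim2])
  also have "\<dots> \<le> 0"
  proof (rule cSup_least)
    have "(0::real) \<in> {..<1} \<inter> {0..}" by simp
    then show "g ` ({..<1} \<inter> {0..}) \<noteq> {}" by blast
  qed (auto simp: g_def intro: kneg)
  finally show False using assms(7) by simp
qed


end
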